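(* Let $H$ be a complex Hilbert space, let $P \in \mathcal{L}(H)$ be a positive operator (i.e. $\langle Px,x\rangle \ge 0$ for all $x\in H$), and let $n$ be a positive integer. Then: (i) $P$ satisfies the property $\mathcal{N}$ if and only if $P^n$ satisfies the property $\mathcal{N}$; (ii) $P$ satisfies the property $\mathcal{N}^*$ if and only if $P^n$ satisfies the property $\mathcal{N}^*$.
   Context: $\mathcal{L}(H)$ is the space of bounded linear operators on $H$. An operator $T \in \mathcal{L}(H)$ satisfies the property $\mathcal{N}$ if there exists $x_0 \in H$ with $\|x_0\|=1$ and $\|Tx_0\| = \|T\|$. With $[T] := \inf_{\|x\| = 1} \|Tx\|$, $T$ satisfies the property $\mathcal{N}^*$ if there exists $x_0 \in H$ with $\|x_0\| = 1$ and $\|Tx_0\| = [T]$. *)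

theory Defs
  imports "HOL-Analysis.Analysis" "HOL-Library.Complex_Order"
begin

text \<open>Complex inner product spaces (HOL provides only real ones).
  The inner product is conjugate-linear in the first argument and linear in the second.\<close>
class complex_inner = real_normed_vector +
  fixes scaleC :: "complex \<Rightarrow> 'a \<Rightarrow> 'a" (infixr "*\<^sub>C" 75)
    and cinner :: "'a \<Rightarrow> 'a \<Rightarrow> complex"
  assumes scaleC_add_right: "a *\<^sub>C (x + y) = a *\<^sub>C x + a *\<^sub>C y"
    and scaleC_add_left: "(a + b) *\<^sub>C x = a *\<^sub>C x + b *\<^sub>C x"
    and scaleC_scaleC: "a *\<^sub>C (b *\<^sub>C x) = (a * b) *\<^sub>C x"
    and scaleC_one: "1 *\<^sub>C x = x"
    and scaleR_scaleC: "scaleR r x = complex_of_real r *\<^sub>C x"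
    and cinner_commute: "cinner x y = cnj (cinner y x)"
    and cinner_add_left: "cinner (x + y) z = cinner x z + cinner y z"
    and cinner_scaleC_left: "cinner (a *\<^sub>C x) y = cnj a * cinner x y"
    and cinner_ge_zero: "0 \<le> cinner x x"
    and cinner_eq_zero_iff: "cinner x x = 0 \<longleftrightarrow> x = 0"
    and norm_eq_sqrt_cinner: "norm x = sqrt (Re (cinner x x))"

class chilbert_space = complex_inner + complete_space

definition bounded_clinear :: "('a::complex_inner \<Rightarrow> 'b::complex_inner) \<Rightarrow> bool" where
  "bounded_clinear T \<longleftrightarrow> bounded_linear T \<and> (\<forall>c x. T (c *\<^sub>C x) = c *\<^sub>C T x)"

text \<open>Positive operator: <Px,x> >= 0 for all x (order on complex from Complex_Order).\<close>
definition positive_op :: "('a::complex_inner \<Rightarrow> 'a) \<Rightarrow> bool" where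
  "positive_op P \<longleftrightarrow> (\<forall>x. 0 \<le> cinner x (P x))"

definition min_modulus :: "('a::real_normed_vector \<Rightarrow> 'b::real_normed_vector) \<Rightarrow> real" where
  "min_modulus T = (INF x\<in>{x. norm x = 1}. norm (T x))"

definition property_N :: "('a::real_normed_vector \<Rightarrow> 'b::real_normed_vector) \<Rightarrow> bool" where
  "property_N T \<longleftrightarrow> (\<exists>x0. norm x0 = 1 \<and> norm (T x0) = onorm T)"

definition property_N_star :: "('a::real_normed_vector \<Rightarrow> 'b::real_normed_vector) \<Rightarrow> bool" where
  "property_N_star T \<longleftrightarrow> (\<exists>x0. norm x0 = 1 \<and> norm (T x0) = min_modulus T)"

end

theory Submission
  imports Defs
begin



context begin

lemma cinner_add_right: "cinner x (y + z) = cinner x y + cinner (x::'a::complex_inner) z"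
  by (metis cinner_add_left cinner_commute complex_cnj_add)

lemma cinner_scaleC_right: "cinner x (a *\<^sub>C y) = a * cinner (x::'a::complex_inner) y"
  by (metis cinner_commute cinner_scaleC_left complex_cnj_cnj complex_cnj_mult)

lemma cinner_scaleR_left: "cinner (r *\<^sub>R x) y = complex_of_real r * cinner (x::'a::complex_inner) y"
  by (simp add: scaleR_scaleC cinner_scaleC_left)

lemma cinner_scaleR_right: "cinner x (r *\<^sub>R y) = complex_of_real r * cinner (x::'a::complex_inner) y"
  by (simp add: scaleR_scaleC cinner_scaleC_right)

lemma cinner_minus_left: "cinner (- x) y = - cinner (x::'a::complex_inner) y"
  using cinner_scaleR_left[of "-1" x y] by simp

lemma cinner_minus_right: "cinner x (- y) = - cinner (x::'a::complex_inner) y"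
  using cinner_scaleR_right[of x "-1" y] by simp

lemma cinner_diff_left: "cinner (x - y) z = cinner x z - cinner (y::'a::complex_inner) z"
  by (metis cinner_add_left cinner_minus_left diff_conv_add_uminus)

lemma cinner_diff_right: "cinner x (y - z) = cinner x y - cinner (x::'a::complex_inner) z"
  by (metis cinner_add_right cinner_minus_right diff_conv_add_uminus)

lemma Re_sym: "Re (cinner x y) = Re (cinner y (x::'a::complex_inner))"
  by (subst cinner_commute) simp

lemma Re_self: "Re (cinner x x) = (norm (x::'a::complex_inner))^2"
proof -
  have "0 \<le> Re (cinner x x)" using cinner_ge_zero[of x] by (simp add: less_eq_complex_def)
  then show ?thesis by (simp add: norm_eq_sqrt_cinner)
qed

lemma Re_CS0:
  fixes Q :: "'a::complex_inner \<Rightarrow> 'a"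
  assumes add: "\<And>x y. Q (x + y) = Q x + Q y" and sc: "\<And>r x. Q (r *\<^sub>R x) = r *\<^sub>R Q x"
    and sym: "\<And>x y. Re (cinner x (Q y)) = Re (cinner (Q x) y)"
    and pos: "\<And>x. 0 \<le> Re (cinner x (Q x))"
  shows "(Re (cinner a (Q b)))^2 \<le> Re (cinner a (Q a)) * Re (cinner b (Q b))"
proof -
  define A where "A = Re (cinner a (Q a))"
  define B where "B = Re (cinner a (Q b))"
  define C where "C = Re (cinner b (Q b))"
  have ba: "Re (cinner b (Q a)) = B" unfolding B_def using sym[of b a] Re_sym by metis
  have f: "0 \<le> A + 2 * t * B + t^2 * C" for t
  proof -
    have "0 \<le> Re (cinner (a + t *\<^sub>R b) (Q (a + t *\<^sub>R b)))" by (rule pos)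
    also have "\<dots> = A + 2 * t * B + t^2 * C"
      by (simp add: add sc cinner_add_left cinner_add_right cinner_scaleR_left cinner_scaleR_right
          A_def B_def C_def ba power2_eq_square algebra_simps)
    finally show ?thesis .
  qed
  have A0: "0 \<le> A" using pos A_def by simp
  have C0: "0 \<le> C" using pos C_def by simp
  show ?thesis
  proof (cases "C = 0")
    case True
    have "B = 0"
    proof (rule ccontr)
      assume "B \<noteq> 0"
      have "0 \<le> A + 2 * (- (A + 1) / (2 * B)) * B" using f[of "- (A + 1) / (2 * B)"] True by simp
      also have "\<dots> = -1" using \<open>B \<noteq> 0\<close> by (simp add: field_simps)
      finally show False by simp
    qed
    then show ?thesis using True A_def B_def C_def by simp
  next
    case False
    then have Cp: "C > 0" using C0 by simp
    have "0 \<le> A + 2 * (- B / C) * B + (- B / C)^2 * C" by (rule f)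
    also have "\<dots> = A - B^2 / C" using Cp by (simp add: field_simps power2_eq_square)
    finally have "B^2 / C \<le> A" by simp
    then have "B^2 \<le> A * C" using Cp by (simp add: divide_le_eq)
    then show ?thesis by (simp add: A_def B_def C_def)
  qed
qed

lemma Re_CS: "\<bar>Re (cinner a b)\<bar> \<le> norm a * norm (b::'a::complex_inner)"
proof -
  have "(Re (cinner a ((\<lambda>x. x) b)))^2 \<le> Re (cinner a ((\<lambda>x. x) a)) * Re (cinner b ((\<lambda>x. x) b))"
    by (rule Re_CS0) (auto simp: Re_self)
  then have "\<bar>Re (cinner a b)\<bar>^2 \<le> (norm a * norm b)^2" by (simp add: Re_self power_mult_distrib)
  then show ?thesis by (rule power2_le_imp_le) simp
qed

end



lemma bl_pow: "bounded_linear (P::'a::real_normed_vector \<Rightarrow> 'a) \<Longrightarrow> bounded_linear (P ^^ k)"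
proof (induction k)
  case 0 have "(P ^^ 0) = (\<lambda>x. x)" by (rule ext) simp
  then show ?case using bounded_linear_ident by metis
next
  case (Suc k) then show ?case by (simp add: bounded_linear_compose)
qed

lemma pos_Im: "positive_op P \<Longrightarrow> Im (cinner x (P x)) = 0"
  unfolding positive_op_def by (metis less_eq_complex_def zero_complex.sel(2))

lemma pos_Re: "positive_op P \<Longrightarrow> 0 \<le> Re (cinner x (P x))"
  unfolding positive_op_def by (metis less_eq_complex_def zero_complex.sel(1))

lemma SA:
  fixes P :: "'a::complex_inner \<Rightarrow> 'a"
  assumes bc: "bounded_clinear P" and pos: "positive_op P"
  shows "Re (cinner x (P y)) = Re (cinner (P x) y)"
proof -
  interpret bounded_linear P using bc unfolding bounded_clinear_def by simp
  have sc: "P (c *\<^sub>C z) = c *\<^sub>C P z" for c z using bc unfolding bounded_clinear_def by simp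
  define B where "B u v = cinner u (P v)" for u v
  have Bim: "Im (B z z) = 0" for z unfolding B_def by (rule pos_Im[OF pos])
  have e1: "B (x + y) (x + y) = B x x + B x y + B y x + B y y"
    unfolding B_def by (simp add: add cinner_add_left cinner_add_right)
  have e2: "B (x + \<i> *\<^sub>C y) (x + \<i> *\<^sub>C y) = B x x + \<i> * B x y - \<i> * B y x + B (\<i> *\<^sub>C y) (\<i> *\<^sub>C y)"
    unfolding B_def by (simp add: add sc cinner_add_left cinner_add_right cinner_scaleC_left cinner_scaleC_right algebra_simps)
  have "Im (B x y) + Im (B y x) = 0" using e1 Bim[of "x+y"] Bim[of x] Bim[of y] by simp
  moreover have "Re (B x y) - Re (B y x) = 0"
    using e2 Bim[of "x + \<i> *\<^sub>C y"] Bim[of x] Bim[of "\<i> *\<^sub>C y"] by simp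
  ultimately have "Re (B x y) = Re (B y x)" by simp
  then show ?thesis unfolding B_def using Re_sym by metis
qed

lemma SA_pow:
  fixes P :: "'a::complex_inner \<Rightarrow> 'a"
  assumes bc: "bounded_clinear P" and pos: "positive_op P"
  shows "Re (cinner x ((P ^^ k) y)) = Re (cinner ((P ^^ k) x) y)"
proof (induction k arbitrary: x y)
  case 0 then show ?case by simp
next
  case (Suc k)
  have "Re (cinner x ((P ^^ Suc k) y)) = Re (cinner (P x) ((P ^^ k) y))"
    by (simp add: SA[OF bc pos])
  also have "\<dots> = Re (cinner ((P ^^ k) (P x)) y)" by (rule Suc)
  also have "\<dots> = Re (cinner ((P ^^ Suc k) x) y)" by (simp add: funpow_swap1)
  finally show ?case .
qed




lemma scale_unit:
  fixes f :: "'a::real_normed_vector \<Rightarrow> 'b::real_normed_vector"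
  assumes "bounded_linear f" "x \<noteq> 0"
  shows "norm ((1 / norm x) *\<^sub>R x) = 1" "norm (f ((1 / norm x) *\<^sub>R x)) = norm (f x) / norm x"
proof -
  interpret bounded_linear f by fact
  show "norm ((1 / norm x) *\<^sub>R x) = 1" using assms(2) by simp
  show "norm (f ((1 / norm x) *\<^sub>R x)) = norm (f x) / norm x" by (simp add: scaleR)
qed

context
  fixes P :: "'a::complex_inner \<Rightarrow> 'a"
  assumes bc: "bounded_clinear P" and pos: "positive_op P"
begin

lemma blP: "bounded_linear P" using bc unfolding bounded_clinear_def by simp

lemma LC1: "(norm ((P ^^ Suc k) x))^2 \<le> norm ((P ^^ k) x) * norm ((P ^^ Suc (Suc k)) x)"
proof -
  have "(norm ((P ^^ Suc k) x))^2 = Re (cinner (P ((P ^^ k) x)) ((P ^^ Suc k) x))"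
    by (simp add: Re_self)
  also have "\<dots> = Re (cinner ((P ^^ k) x) (P ((P ^^ Suc k) x)))"
    by (simp add: SA[OF bc pos])
  also have "\<dots> \<le> norm ((P ^^ k) x) * norm ((P ^^ Suc (Suc k)) x)"
    using Re_CS[of "(P ^^ k) x" "P ((P ^^ Suc k) x)"] by simp
  finally show ?thesis .
qed

lemma LC2: "norm x = 1 \<Longrightarrow> norm (P x) * norm ((P ^^ k) x) \<le> norm ((P ^^ Suc k) x)"
proof (induction k)
  case 0 then show ?case by simp
next
  case (Suc k)
  define a where "a = norm (P x)"
  define b where "b = norm ((P ^^ k) x)"
  define c where "c = norm ((P ^^ Suc k) x)"
  define d where "d = norm ((P ^^ Suc (Suc k)) x)"
  have ih: "a * b \<le> c" using Suc unfolding a_def b_def c_def by simp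
  have lc: "c^2 \<le> b * d" using LC1[of k x] unfolding b_def c_def d_def by simp
  have a0: "0 \<le> a" "0 \<le> d" "0 \<le> c" unfolding a_def d_def c_def by simp_all
  have "a * c \<le> d"
  proof (cases "c = 0")
    case True then show ?thesis using a0 by simp
  next
    case False
    then have cp: "c > 0" using a0 by simp
    have "a * c * c \<le> a * (b * d)" using mult_left_mono[OF lc a0(1)] by (simp add: power2_eq_square mult.assoc)
    also have "\<dots> = (a * b) * d" by simp
    also have "\<dots> \<le> c * d" using mult_right_mono[OF ih a0(2)] .
    finally have "(a * c) * c \<le> d * c" by (simp add: mult.commute)
    then show ?thesis using cp by simp
  qed
  then show ?case unfolding a_def c_def d_def by simp
qed

lemma LC3: "norm x = 1 \<Longrightarrow> (norm (P x))^k \<le> norm ((P ^^ k) x)"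
proof (induction k)
  case 0 then show ?case by simp
next
  case (Suc k)
  have "(norm (P x))^Suc k = norm (P x) * (norm (P x))^k" by simp
  also have "\<dots> \<le> norm (P x) * norm ((P ^^ k) x)" using Suc by (simp add: mult_left_mono)
  also have "\<dots> \<le> norm ((P ^^ Suc k) x)" using LC2 Suc by blast
  finally show ?case .
qed

lemma onorm_pow: "onorm (P ^^ k) \<le> (onorm P)^k"
proof (induction k)
  case 0
  show ?case using onorm_id_le by (simp add: id_def)
next
  case (Suc k)
  have "P ^^ Suc k = P \<circ> P ^^ k" by simp
  then have "onorm (P ^^ Suc k) \<le> onorm P * onorm (P ^^ k)"
    using onorm_compose[OF blP bl_pow[OF blP]] by simp
  also have "\<dots> \<le> onorm P * (onorm P)^k" using Suc onorm_pos_le[OF blP] by (simp add: mult_left_mono)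
  finally show ?case by (simp add: comp_def)
qed

lemma normpow: "norm ((P ^^ k) y) \<le> (onorm P)^k * norm y"
proof -
  have "norm ((P ^^ k) y) \<le> onorm (P ^^ k) * norm y" by (rule onorm[OF bl_pow[OF blP]])
  also have "\<dots> \<le> (onorm P)^k * norm y" using onorm_pow[of k] by (rule mult_right_mono) simp
  finally show ?thesis .
qed

lemma normpow1: "norm ((P ^^ Suc k) x) \<le> (onorm P)^k * norm (P x)"
proof -
  have "(P ^^ Suc k) x = (P ^^ k) (P x)" by (simp add: funpow_swap1)
  then show ?thesis using normpow by simp
qed

lemma onorm_pow_ge:
  assumes "n \<ge> 1"
  shows "(onorm P)^n \<le> onorm (P ^^ n)"
proof -
  define c where "c = root n (onorm (P ^^ n))"
  have c0: "0 \<le> c" unfolding c_def using onorm_pos_le[OF bl_pow[OF blP]] by (intro real_root_ge_zero onorm_pos_le bl_pow blP)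
  have cn: "c^n = onorm (P ^^ n)" unfolding c_def using assms onorm_pos_le[OF bl_pow[OF blP]]
    by (simp add: real_root_pow_pos2)
  have "onorm P \<le> c"
  proof (rule onorm_bound[OF c0])
    fix x
    show "norm (P x) \<le> c * norm x"
    proof (cases "x = 0")
      case True then show ?thesis using blP by (simp add: linear_simps)
    next
      case False
      define u where "u = (1 / norm x) *\<^sub>R x"
      have u1: "norm u = 1" and pu: "norm (P u) = norm (P x) / norm x"
        using scale_unit[OF blP False] unfolding u_def by auto
      have "(norm (P u))^n \<le> norm ((P ^^ n) u)" by (rule LC3[OF u1])
      also have "\<dots> \<le> onorm (P ^^ n) * norm u" by (rule onorm[OF bl_pow[OF blP]])
      finally have "(norm (P u))^n \<le> c^n" using u1 cn by simp
      moreover obtain k where "n = Suc k" using assms by (cases n) auto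
      ultimately have "norm (P u) \<le> c" using c0 power_le_imp_le_base by blast
      then show ?thesis using pu False by (simp add: divide_le_eq mult.commute)
    qed
  qed
  then have "(onorm P)^n \<le> c^n" using onorm_pos_le[OF blP] by (rule power_mono)
  then show ?thesis using cn by simp
qed

lemma part1:
  assumes "n \<ge> 1"
  shows "property_N P \<longleftrightarrow> property_N (P ^^ n)"
proof
  assume "property_N P"
  then obtain x0 where x0: "norm x0 = 1" "norm (P x0) = onorm P" unfolding property_N_def by auto
  have "onorm (P ^^ n) \<le> (onorm P)^n" by (rule onorm_pow)
  also have "\<dots> \<le> norm ((P ^^ n) x0)" using LC3[OF x0(1)] x0(2) by simp
  finally have "onorm (P ^^ n) \<le> norm ((P ^^ n) x0)" .
  moreover have "norm ((P ^^ n) x0) \<le> onorm (P ^^ n)" using onorm[OF bl_pow[OF blP], of n x0] x0(1) by simp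
  ultimately have "norm ((P ^^ n) x0) = onorm (P ^^ n)" by (rule antisym[rotated])
  then show "property_N (P ^^ n)" unfolding property_N_def using x0(1) by auto
next
  assume "property_N (P ^^ n)"
  then obtain x0 where x0: "norm x0 = 1" "norm ((P ^^ n) x0) = onorm (P ^^ n)" unfolding property_N_def by auto
  define M where "M = onorm P"
  have M0: "0 \<le> M" unfolding M_def by (rule onorm_pos_le[OF blP])
  have up: "norm (P x0) \<le> M" using onorm[OF blP, of x0] x0(1) unfolding M_def by simp
  obtain k where k: "n = Suc k" using assms by (cases n) auto
  have "M^Suc k \<le> M^k * norm (P x0)"
    using onorm_pow_ge[OF assms] x0(2) normpow1[of k x0] k unfolding M_def by simp
  then have "M \<le> norm (P x0)"
  proof (cases "M = 0")
    case True then show ?thesis by simp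
  next
    case False
    then have "M^k > 0" using M0 by simp
    moreover assume "M^Suc k \<le> M^k * norm (P x0)"
    ultimately show ?thesis by (simp add: mult.commute)
  qed
  then have "norm (P x0) = onorm P" using up unfolding M_def by simp
  then show "property_N P" unfolding property_N_def using x0(1) by auto
qed

end



lemma mm_bdd: "bdd_below ((\<lambda>x. norm (T x)) ` {x. norm x = 1})"
  by (rule bdd_belowI[of _ 0]) auto

lemma mm_lower: "norm x = 1 \<Longrightarrow> min_modulus T \<le> norm (T x)"
  unfolding min_modulus_def by (rule cINF_lower[OF mm_bdd]) simp

lemma mm_ge: "norm (x0::'a::real_normed_vector) = 1 \<Longrightarrow> (\<And>x::'a. norm x = 1 \<Longrightarrow> c \<le> norm (T x)) \<Longrightarrow> c \<le> min_modulus T"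
  unfolding min_modulus_def by (rule cINF_greatest) auto

lemma mm_nonneg: "norm (x0::'a::real_normed_vector) = 1 \<Longrightarrow> 0 \<le> min_modulus (T::'a \<Rightarrow> 'b::real_normed_vector)"
  by (rule mm_ge) auto

lemma mm_less: "norm (x0::'a::real_normed_vector) = 1 \<Longrightarrow> min_modulus T < a \<Longrightarrow> \<exists>x::'a. norm x = 1 \<and> norm (T x) < a"
  unfolding min_modulus_def by (subst (asm) cINF_less_iff[OF _ mm_bdd]) auto

context
  fixes P :: "'a::complex_inner \<Rightarrow> 'a"
  assumes bc: "bounded_clinear P" and pos: "positive_op P"
begin

lemma lowbd:
  assumes "norm (x0::'a) = 1"
  shows "min_modulus P * norm y \<le> norm (P y)"
proof (cases "y = 0")
  case True then show ?thesis by simp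
next
  case False
  have "min_modulus P \<le> norm (P ((1 / norm y) *\<^sub>R y))"
    by (rule mm_lower) (use False in \<open>simp add: scale_unit[OF blP[OF bc pos] False]\<close>)
  then show ?thesis using False by (simp add: scale_unit[OF blP[OF bc pos] False] le_divide_eq)
qed

lemma lowpow:
  assumes "norm (x0::'a) = 1"
  shows "(min_modulus P)^k * norm y \<le> norm ((P ^^ k) y)"
proof (induction k)
  case 0 then show ?case by simp
next
  case (Suc k)
  have m0: "0 \<le> min_modulus P" by (rule mm_nonneg[OF assms])
  have "(min_modulus P)^Suc k * norm y = min_modulus P * ((min_modulus P)^k * norm y)" by simp
  also have "\<dots> \<le> min_modulus P * norm ((P ^^ k) y)" using Suc m0 by (rule mult_left_mono)
  also have "\<dots> \<le> norm (P ((P ^^ k) y))" by (rule lowbd[OF assms])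
  finally show ?case by simp
qed

lemma mm_pow_ge:
  assumes "norm (x0::'a) = 1"
  shows "(min_modulus P)^n \<le> min_modulus (P ^^ n)"
  by (rule mm_ge[OF assms]) (metis lowpow[OF assms] mult.right_neutral)

end



context
  fixes P :: "'a::complex_inner \<Rightarrow> 'a"
  assumes bc: "bounded_clinear P" and pos: "positive_op P"
begin

lemma keyE:
  assumes x0: "norm (x0::'a) = 1"
  defines "m \<equiv> min_modulus P"
  defines "K \<equiv> (onorm P)^2 + m^2"
  shows "m^2 * (norm (P x - m *\<^sub>R x))^2 \<le> K * ((norm (P x))^2 - m^2 * (norm x)^2)"
proof -
  interpret bounded_linear P by (rule blP[OF bc pos])
  have m0: "0 \<le> m" unfolding m_def by (rule mm_nonneg[OF x0])
  have K0: "0 \<le> K" unfolding K_def by simp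
  define Q where "Q y = P (P y) - (m^2) *\<^sub>R y" for y
  have Qadd: "Q (a + b) = Q a + Q b" for a b unfolding Q_def by (simp add: add scaleR_add_right)
  have Qsc: "Q (r *\<^sub>R a) = r *\<^sub>R Q a" for r a unfolding Q_def by (simp add: scaleR scaleR_diff_right)
  have PP: "Re (cinner a (P (P b))) = Re (cinner (P (P a)) b)" for a b
    using SA[OF bc pos] by metis
  have Qsym: "Re (cinner a (Q b)) = Re (cinner (Q a) b)" for a b
    unfolding Q_def by (simp add: cinner_diff_left cinner_diff_right cinner_scaleR_left cinner_scaleR_right PP Re_sym[of a b])
  have Qform: "Re (cinner y (Q y)) = (norm (P y))^2 - m^2 * (norm y)^2" for y
  proof -
    have "Re (cinner y (P (P y))) = Re (cinner (P y) (P y))" using SA[OF bc pos] by metis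
    then show ?thesis unfolding Q_def by (simp add: cinner_diff_right cinner_scaleR_right Re_self)
  qed
  have Qpos: "0 \<le> Re (cinner y (Q y))" for y
  proof -
    have "m * norm y \<le> norm (P y)" unfolding m_def by (rule lowbd[OF bc pos x0])
    then have "(m * norm y)^2 \<le> (norm (P y))^2" using m0 by (simp add: power_mono)
    then show ?thesis using Qform by (simp add: power_mult_distrib)
  qed
  have Qnorm: "norm (Q y) \<le> K * norm y" for y
  proof -
    have "norm (P (P y)) \<le> (onorm P)^2 * norm y" using normpow[OF bc pos, of 2 y] by (simp add: numeral_2_eq_2)
    then show ?thesis unfolding Q_def K_def
      using norm_triangle_ineq4[of "P (P y)" "m\<^sup>2 *\<^sub>R y"] by (simp add: algebra_simps)
  qed
  define R where "R = Re (cinner x (Q x))"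
  have R0: "0 \<le> R" unfolding R_def by (rule Qpos)
  have cs: "(Re (cinner x (Q (Q x))))^2 \<le> R * Re (cinner (Q x) (Q (Q x)))"
    unfolding R_def by (rule Re_CS0[OF Qadd Qsc Qsym Qpos])
  have e1: "Re (cinner x (Q (Q x))) = (norm (Q x))^2" by (simp add: Qsym Re_self)
  have e2: "Re (cinner (Q x) (Q (Q x))) \<le> K * (norm (Q x))^2"
  proof -
    have "Re (cinner (Q x) (Q (Q x))) \<le> norm (Q x) * norm (Q (Q x))" using Re_CS[of "Q x" "Q (Q x)"] by simp
    also have "\<dots> \<le> norm (Q x) * (K * norm (Q x))" by (rule mult_left_mono[OF Qnorm]) simp
    finally show ?thesis by (simp add: power2_eq_square algebra_simps)
  qed
  have "(norm (Q x))^2 * (norm (Q x))^2 \<le> (K * R) * (norm (Q x))^2"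
  proof -
    have "(norm (Q x))^2 * (norm (Q x))^2 = (Re (cinner x (Q (Q x))))^2" by (simp add: e1 power2_eq_square)
    also have "\<dots> \<le> R * Re (cinner (Q x) (Q (Q x)))" by (rule cs)
    also have "\<dots> \<le> R * (K * (norm (Q x))^2)" by (rule mult_left_mono[OF e2 R0])
    finally show ?thesis by (simp add: algebra_simps)
  qed
  then have Qx: "(norm (Q x))^2 \<le> K * R"
  proof (cases "Q x = 0")
    case True then show ?thesis using K0 R0 by simp
  next
    case False
    then have "0 < (norm (Q x))^2" by simp
    moreover assume "(norm (Q x))^2 * (norm (Q x))^2 \<le> (K * R) * (norm (Q x))^2"
    ultimately show ?thesis using mult_right_le_imp_le by blast
  qed
  define z where "z = P x - m *\<^sub>R x"
  have Pz: "P z + m *\<^sub>R z = Q x" unfolding z_def Q_def by (simp add: diff scaleR algebra_simps power2_eq_square)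
  have "(norm (P z + m *\<^sub>R z))^2 = (norm (P z))^2 + 2 * m * Re (cinner z (P z)) + m^2 * (norm z)^2"
  proof -
    have s: "Re (cinner (P z) z) = Re (cinner z (P z))" by (rule Re_sym)
    have "(norm (P z + m *\<^sub>R z))^2 = Re (cinner (P z + m *\<^sub>R z) (P z + m *\<^sub>R z))"
      by (simp only: Re_self)
    also have "\<dots> = Re (cinner (P z) (P z)) + 2 * m * Re (cinner z (P z)) + m^2 * Re (cinner z z)"
      by (simp add: cinner_add_left cinner_add_right cinner_scaleR_left cinner_scaleR_right s
          power2_eq_square algebra_simps)
    also have "\<dots> = (norm (P z))^2 + 2 * m * Re (cinner z (P z)) + m^2 * (norm z)^2"
      by (simp only: Re_self)
    finally show ?thesis .
  qed
  also have "\<dots> \<ge> m^2 * (norm z)^2" using pos_Re[OF pos, of z] m0 by simp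
  finally have "m^2 * (norm z)^2 \<le> (norm (Q x))^2" using Pz by simp
  also have "\<dots> \<le> K * R" by (rule Qx)
  finally show ?thesis unfolding z_def R_def Qform .
qed

end



context
  fixes P :: "'a::complex_inner \<Rightarrow> 'a"
  assumes bc: "bounded_clinear P" and pos: "positive_op P"
begin

lemma eigen:
  assumes x0: "norm (x0::'a) = 1" and px: "norm (P x0) = min_modulus P"
  shows "P x0 = min_modulus P *\<^sub>R x0"
proof -
  define m where "m = min_modulus P"
  have "m^2 * (norm (P x0 - m *\<^sub>R x0))^2 \<le> ((onorm P)^2 + m^2) * ((norm (P x0))^2 - m^2 * (norm x0)^2)"
    unfolding m_def by (rule keyE[OF bc pos x0])
  also have "\<dots> = 0" using x0 px unfolding m_def by simp
  finally have h: "m^2 * (norm (P x0 - m *\<^sub>R x0))^2 \<le> 0" .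
  show ?thesis
  proof (cases "m = 0")
    case True then show ?thesis using px unfolding m_def by simp
  next
    case False
    then have "0 < m^2" by simp
    with h have "(norm (P x0 - m *\<^sub>R x0))^2 \<le> 0" by (simp add: mult_le_0_iff)
    then show ?thesis unfolding m_def by simp
  qed
qed

lemma eig_pow: "P x0 = c *\<^sub>R x0 \<Longrightarrow> (P ^^ k) x0 = c^k *\<^sub>R x0"
proof (induction k)
  case 0 then show ?case by simp
next
  case (Suc k)
  interpret bounded_linear P by (rule blP[OF bc pos])
  have "(P ^^ Suc k) x0 = P (c^k *\<^sub>R x0)" using Suc by simp
  also have "\<dots> = c^Suc k *\<^sub>R x0" using Suc by (simp add: scaleR)
  finally show ?case .
qed

lemma tele:
  assumes x: "norm (x::'a) = 1"
  defines "m \<equiv> min_modulus P"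
  defines "M \<equiv> onorm P"
  shows "norm ((P ^^ k) x - m^k *\<^sub>R x) \<le> real k * (M + 1)^k * norm (P x - m *\<^sub>R x)"
proof (induction k)
  case 0 then show ?case by simp
next
  case (Suc k)
  interpret Pk: bounded_linear "P ^^ k" by (rule bl_pow[OF blP[OF bc pos]])
  define eta where "eta = norm (P x - m *\<^sub>R x)"
  define d where "d = norm ((P ^^ k) x - m^k *\<^sub>R x)"
  have m0: "0 \<le> m" unfolding m_def by (rule mm_nonneg[OF x])
  have M0: "0 \<le> M" unfolding M_def by (rule onorm_pos_le[OF blP[OF bc pos]])
  have mM: "m \<le> M + 1"
  proof -
    have "m \<le> norm (P x)" unfolding m_def by (rule mm_lower[OF x])
    also have "\<dots> \<le> M" using onorm[OF blP[OF bc pos], of x] x unfolding M_def by simp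
    finally show ?thesis by simp
  qed
  have e0: "0 \<le> eta" "0 \<le> d" unfolding eta_def d_def by simp_all
  have eq: "(P ^^ Suc k) x - m^Suc k *\<^sub>R x = (P ^^ k) (P x - m *\<^sub>R x) + m *\<^sub>R ((P ^^ k) x - m^k *\<^sub>R x)"
    by (simp add: funpow_swap1 Pk.diff Pk.scaleR algebra_simps)
  have "norm ((P ^^ Suc k) x - m^Suc k *\<^sub>R x) \<le> norm ((P ^^ k) (P x - m *\<^sub>R x)) + m * d"
    unfolding eq d_def using norm_triangle_ineq m0 by (metis abs_of_nonneg norm_scaleR)
  also have "\<dots> \<le> M^k * eta + m * (real k * (M + 1)^k * eta)"
    using normpow[OF bc pos, of k "P x - m *\<^sub>R x"] Suc m0 unfolding M_def eta_def d_def
    by (intro add_mono mult_left_mono) simp_all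
  also have "\<dots> \<le> (M + 1)^k * eta + (M + 1) * (real k * (M + 1)^k * eta)"
    using M0 e0 mM by (intro add_mono mult_right_mono mult_mono power_mono) simp_all
  also have "\<dots> = (1 + real k * (M + 1)) * (M + 1)^k * eta" by (simp add: algebra_simps)
  also have "\<dots> \<le> real (Suc k) * (M + 1)^Suc k * eta"
  proof -
    have "1 + real k * (M + 1) \<le> (1 + real k) * (M + 1)" using M0 by (simp add: algebra_simps)
    then have "(1 + real k * (M + 1)) * ((M + 1)^k * eta) \<le> ((1 + real k) * (M + 1)) * ((M + 1)^k * eta)"
      using M0 e0 by (intro mult_right_mono) simp_all
    then show ?thesis by (simp add: algebra_simps)
  qed
  finally show ?case unfolding eta_def .
qed

end



context
  fixes P :: "'a::complex_inner \<Rightarrow> 'a"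
  assumes bc: "bounded_clinear P" and pos: "positive_op P"
begin

lemma approx:
  assumes x0: "norm (x0::'a) = 1" and eta: "0 < eta"
  shows "\<exists>x. norm x = 1 \<and> norm (P x - min_modulus P *\<^sub>R x) \<le> eta"
proof -
  define m where "m = min_modulus P"
  define K where "K = (onorm P)^2 + m^2"
  have m0: "0 \<le> m" unfolding m_def by (rule mm_nonneg[OF x0])
  have K0: "0 \<le> K" unfolding K_def by simp
  show ?thesis
  proof (cases "m = 0")
    case True
    obtain x where "norm x = 1" "norm (P x) < m + eta"
      using mm_less[OF x0, of P "m + eta"] eta unfolding m_def by auto
    then show ?thesis using True unfolding m_def by (intro exI[of _ x]) simp
  next
    case False
    then have mp: "0 < m" using m0 by simp
    define del where "del = min 1 (m^2 * eta^2 / (K * (2 * m + 1) + 1))"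
    have dp: "0 < del" unfolding del_def using mp eta K0 by (simp add: add_nonneg_pos)
    have d1: "del \<le> 1" unfolding del_def by simp
    have dK: "del * (K * (2 * m + 1) + 1) \<le> m^2 * eta^2"
    proof -
      have "0 < K * (2 * m + 1) + 1" using K0 m0 by (simp add: add_nonneg_pos)
      moreover have "del \<le> m^2 * eta^2 / (K * (2 * m + 1) + 1)" unfolding del_def by simp
      ultimately show ?thesis by (simp add: le_divide_eq)
    qed
    obtain x where x: "norm x = 1" "norm (P x) < m + del"
      using mm_less[OF x0, of P "m + del"] dp unfolding m_def by auto
    have lo: "m \<le> norm (P x)" unfolding m_def by (rule mm_lower[OF x(1)])
    have "(norm (P x))^2 - m^2 = (norm (P x) - m) * (norm (P x) + m)" by (simp add: power2_eq_square algebra_simps)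
    also have "\<dots> \<le> del * (2 * m + 1)"
      using lo x(2) d1 m0 by (intro mult_mono) simp_all
    finally have h1: "(norm (P x))^2 - m^2 \<le> del * (2 * m + 1)" .
    have "m^2 * (norm (P x - m *\<^sub>R x))^2 \<le> K * ((norm (P x))^2 - m^2 * (norm x)^2)"
      unfolding m_def K_def by (rule keyE[OF bc pos x0])
    also have "\<dots> \<le> K * (del * (2 * m + 1))" using h1 x(1) K0 by (intro mult_left_mono) simp_all
    also have "\<dots> \<le> m^2 * eta^2" using dK dp by (simp add: algebra_simps)
    finally have "m^2 * (norm (P x - m *\<^sub>R x))^2 \<le> m^2 * eta^2" .
    then have "(norm (P x - m *\<^sub>R x))^2 \<le> eta^2" using mp by (simp add: mult_le_cancel_left_pos)
    then have "norm (P x - m *\<^sub>R x) \<le> eta" by (rule power2_le_imp_le[OF _ less_imp_le[OF eta]])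
    then show ?thesis using x(1) unfolding m_def by blast
  qed
qed

lemma mm_pow_le:
  assumes x0: "norm (x0::'a) = 1"
  shows "min_modulus (P ^^ n) \<le> (min_modulus P)^n"
proof (rule field_le_epsilon)
  fix e :: real assume e: "0 < e"
  define m where "m = min_modulus P"
  define M where "M = onorm P"
  have M0: "0 \<le> M" unfolding M_def by (rule onorm_pos_le[OF blP[OF bc pos]])
  define C where "C = real n * (M + 1)^n"
  have C0: "0 \<le> C" unfolding C_def using M0 by simp
  define eta where "eta = e / (C + 1)"
  have etap: "0 < eta" unfolding eta_def using e C0 by simp
  obtain x where x: "norm x = 1" "norm (P x - m *\<^sub>R x) \<le> eta"
    using approx[OF x0 etap] unfolding m_def by auto
  have m0: "0 \<le> m" unfolding m_def by (rule mm_nonneg[OF x0])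
  have "min_modulus (P ^^ n) \<le> norm ((P ^^ n) x)" by (rule mm_lower[OF x(1)])
  also have "\<dots> \<le> norm (m^n *\<^sub>R x) + norm ((P ^^ n) x - m^n *\<^sub>R x)"
  proof -
    have "(P ^^ n) x = m^n *\<^sub>R x + ((P ^^ n) x - m^n *\<^sub>R x)" by simp
    then show ?thesis using norm_triangle_ineq[of "m^n *\<^sub>R x" "(P ^^ n) x - m^n *\<^sub>R x"] by metis
  qed
  also have "\<dots> \<le> m^n + C * eta"
  proof -
    have "norm ((P ^^ n) x - m^n *\<^sub>R x) \<le> C * norm (P x - m *\<^sub>R x)"
      unfolding C_def m_def M_def by (rule tele[OF bc pos x(1)])
    also have "\<dots> \<le> C * eta" using x(2) C0 by (rule mult_left_mono)
    finally show ?thesis using x(1) m0 by simp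
  qed
  also have "\<dots> \<le> m^n + e"
  proof -
    have "C * eta = e * (C / (C + 1))" unfolding eta_def using C0 by simp
    also have "\<dots> \<le> e * 1" using C0 e by (intro mult_left_mono) simp_all
    finally show ?thesis by simp
  qed
  finally show "min_modulus (P ^^ n) \<le> (min_modulus P)^n + e" unfolding m_def .
qed

lemma part2:
  assumes "n \<ge> 1"
  shows "property_N_star P \<longleftrightarrow> property_N_star (P ^^ n)"
proof
  assume "property_N_star P"
  then obtain x0 where x0: "norm x0 = 1" "norm (P x0) = min_modulus P" unfolding property_N_star_def by auto
  have m0: "0 \<le> min_modulus P" by (rule mm_nonneg[OF x0(1)])
  have "(P ^^ n) x0 = (min_modulus P)^n *\<^sub>R x0" by (rule eig_pow[OF bc pos eigen[OF bc pos x0]])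
  then have "norm ((P ^^ n) x0) = (min_modulus P)^n" using x0(1) m0 by simp
  moreover have "min_modulus (P ^^ n) \<le> norm ((P ^^ n) x0)" by (rule mm_lower[OF x0(1)])
  moreover have "(min_modulus P)^n \<le> min_modulus (P ^^ n)" by (rule mm_pow_ge[OF bc pos x0(1)])
  ultimately have "norm ((P ^^ n) x0) = min_modulus (P ^^ n)" by simp
  then show "property_N_star (P ^^ n)" unfolding property_N_star_def using x0(1) by auto
next
  assume "property_N_star (P ^^ n)"
  then obtain x0 where x0: "norm x0 = 1" "norm ((P ^^ n) x0) = min_modulus (P ^^ n)" unfolding property_N_star_def by auto
  have m0: "0 \<le> min_modulus P" by (rule mm_nonneg[OF x0(1)])
  have "(norm (P x0))^n \<le> norm ((P ^^ n) x0)" by (rule LC3[OF bc pos x0(1)])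
  also have "\<dots> \<le> (min_modulus P)^n" using x0(2) mm_pow_le[OF x0(1)] by simp
  finally have h: "(norm (P x0))^n \<le> (min_modulus P)^n" .
  obtain k where k: "n = Suc k" using assms by (cases n) auto
  have "norm (P x0) \<le> min_modulus P" using h m0 unfolding k by (rule power_le_imp_le_base)
  moreover have "min_modulus P \<le> norm (P x0)" by (rule mm_lower[OF x0(1)])
  ultimately have "norm (P x0) = min_modulus P" by simp
  then show "property_N_star P" unfolding property_N_star_def using x0(1) by auto
qed

end

theorem proposition2p10:
  fixes P :: "'a::chilbert_space \<Rightarrow> 'a" and n :: nat
  assumes "bounded_clinear P" and "positive_op P" and "n \<ge> 1"
  shows "(property_N P \<longleftrightarrow> property_N (P ^^ n))
       \<and> (property_N_star P \<longleftrightarrow> property_N_star (P ^^ n))"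
  using part1[OF assms(1,2,3)] part2[OF assms(1,2,3)] by simp



end
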